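(* For every proper caterpillar $T$ and every $\beta\in\Phi(T)$, \[U^L_T(\mathbf{x})=\mathcal{L}(\beta,\mathbf{x}).\]
   Context: Let $\mathbf{x}=x_1,x_2,\ldots$ be commuting indeterminates; for a partition $\lambda=\lambda_1\cdots\lambda_l$ put $\mathbf{x}_\lambda=x_{\lambda_1}\cdots x_{\lambda_l}$. A composition is a finite nonempty sequence of positive integers; the type $\lambda(\alpha)$ of a composition $\alpha$ is the partition obtained by sorting its parts in weakly decreasing order. A composition $\alpha$ is a coarsening of $\beta$, written $\alpha\succeq\beta$, if $\alpha$ is obtained from $\beta$ by summing blocks of consecutive parts (i.e. there are indices $1=j_0<j_1<\cdots<j_{i+1}=\ell(\beta)+1$ with $\alpha_r=\beta_{j_{r-1}}+\cdots+\beta_{j_r-1}$). The $\mathcal{L}$-polynomial is $\mathcal{L}(\beta,\mathbf{x})=\sum_{\alpha\succeq\beta}\mathbf{x}_{\lambda(\alpha)}$. A caterpillar is a tree in which the internal (non-leaf) vertices induce a non-trivial path (the spine), with $L(T)$ the set of non-spine edges; it is proper if every internal vertex is adjacent to a leaf. For $A\subseteq E(T)$, $\lambda(A)$ is the partition formed by the sizes of the components of $(V(T),A)$, and $U^L_T(\mathbf{x})=\sum_{A\subseteq E(T),\,L(T)\subseteq A}\mathbf{x}_{\lambda(A)}$. For a proper caterpillar with spine $v_1\cdots v_k$, let $\beta_i$ be the number of vertices of the component of $(V(T),L(T))$ containing $v_i$, and $\Phi(T)=\{\beta_1\cdots\beta_k,\ \beta_k\cdots\beta_1\}$. *)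

theory Defs
  imports Main "HOL-Library.Multiset"
begin

definition simple_graph :: "'v set \<Rightarrow> 'v set set \<Rightarrow> bool" where
  "simple_graph V E \<longleftrightarrow> finite V \<and>
     (\<forall>e\<in>E. \<exists>u v. u \<noteq> v \<and> u \<in> V \<and> v \<in> V \<and> e = {u, v})"

definition adj_rel :: "'v set set \<Rightarrow> ('v \<times> 'v) set" where
  "adj_rel A = {(a, b). {a, b} \<in> A}"

definition component :: "'v set \<Rightarrow> 'v set set \<Rightarrow> 'v \<Rightarrow> 'v set" where
  "component V A v = {u \<in> V. (v, u) \<in> (adj_rel A)\<^sup>*}"

definition components :: "'v set \<Rightarrow> 'v set set \<Rightarrow> 'v set set" where
  "components V A = component V A ` V"

definition connected_graph :: "'v set \<Rightarrow> 'v set set \<Rightarrow> bool" where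
  "connected_graph V E \<longleftrightarrow> V \<noteq> {} \<and> (\<forall>u\<in>V. \<forall>v\<in>V. (u, v) \<in> (adj_rel E)\<^sup>*)"

definition is_cycle :: "'v set set \<Rightarrow> 'v list \<Rightarrow> bool" where
  "is_cycle E cs \<longleftrightarrow> length cs \<ge> 3 \<and> distinct cs \<and>
     (\<forall>i. Suc i < length cs \<longrightarrow> {cs ! i, cs ! Suc i} \<in> E) \<and> {last cs, hd cs} \<in> E"

definition acyclic_graph :: "'v set set \<Rightarrow> bool" where
  "acyclic_graph E \<longleftrightarrow> \<not> (\<exists>cs. is_cycle E cs)"

definition is_tree :: "'v set \<Rightarrow> 'v set set \<Rightarrow> bool" where
  "is_tree V E \<longleftrightarrow> simple_graph V E \<and> connected_graph V E \<and> acyclic_graph E"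

definition degree :: "'v set set \<Rightarrow> 'v \<Rightarrow> nat" where
  "degree E v = card {e \<in> E. v \<in> e}"

definition is_leaf :: "'v set set \<Rightarrow> 'v \<Rightarrow> bool" where
  "is_leaf E v \<longleftrightarrow> degree E v = 1"

definition internal :: "'v set \<Rightarrow> 'v set set \<Rightarrow> 'v set" where
  "internal V E = {v \<in> V. \<not> is_leaf E v}"

definition is_spine :: "'v set \<Rightarrow> 'v set set \<Rightarrow> 'v list \<Rightarrow> bool" where
  "is_spine V E vs \<longleftrightarrow> length vs \<ge> 2 \<and> distinct vs \<and> set vs = internal V E \<and>
     {e \<in> E. e \<subseteq> set vs} = {{vs ! i, vs ! Suc i} | i. Suc i < length vs}"

definition caterpillar :: "'v set \<Rightarrow> 'v set set \<Rightarrow> bool" where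
  "caterpillar V E \<longleftrightarrow> is_tree V E \<and> (\<exists>vs. is_spine V E vs)"

definition proper_caterpillar :: "'v set \<Rightarrow> 'v set set \<Rightarrow> bool" where
  "proper_caterpillar V E \<longleftrightarrow> caterpillar V E \<and>
     (\<forall>v \<in> internal V E. \<exists>u. is_leaf E u \<and> {u, v} \<in> E)"

text \<open>\<open>L(T)\<close>: the non-spine edges, i.e. edges not joining two internal vertices.\<close>
definition leaf_edges :: "'v set \<Rightarrow> 'v set set \<Rightarrow> 'v set set" where
  "leaf_edges V E = {e \<in> E. \<not> e \<subseteq> internal V E}"

text \<open>\<open>\<Phi>(T) = {\<beta>_1\<cdots>\<beta>_k, \<beta>_k\<cdots>\<beta>_1}\<close>; the spine is unique up to reversal, so this is
  the set of sequences obtained from all spine orderings.\<close>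
definition Phi :: "'v set \<Rightarrow> 'v set set \<Rightarrow> nat list set" where
  "Phi V E = {map (\<lambda>v. card (component V (leaf_edges V E) v)) vs | vs. is_spine V E vs}"

definition partition_of :: "'v set \<Rightarrow> 'v set set \<Rightarrow> nat multiset" where
  "partition_of V A = image_mset card (mset_set (components V A))"

definition xmon :: "(nat \<Rightarrow> 'a::comm_ring_1) \<Rightarrow> nat multiset \<Rightarrow> 'a" where
  "xmon x \<mu> = prod_mset (image_mset x \<mu>)"

definition U_L :: "'v set \<Rightarrow> 'v set set \<Rightarrow> (nat \<Rightarrow> 'a::comm_ring_1) \<Rightarrow> 'a" where
  "U_L V E x = (\<Sum>A \<in> {A. A \<subseteq> E \<and> leaf_edges V E \<subseteq> A}. xmon x (partition_of V A))"

definition composition :: "nat list \<Rightarrow> bool" where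
  "composition \<beta> \<longleftrightarrow> \<beta> \<noteq> [] \<and> (\<forall>b \<in> set \<beta>. 0 < b)"

definition coarsening :: "nat list \<Rightarrow> nat list \<Rightarrow> bool" where
  "coarsening \<alpha> \<beta> \<longleftrightarrow> (\<exists>bs. concat bs = \<beta> \<and> (\<forall>b \<in> set bs. b \<noteq> []) \<and> \<alpha> = map sum_list bs)"

text \<open>The type \<open>\<lambda>(\<alpha>)\<close> of a composition, as a multiset, is \<open>mset \<alpha>\<close>.\<close>
definition L_poly :: "nat list \<Rightarrow> (nat \<Rightarrow> 'a::comm_ring_1) \<Rightarrow> 'a" where
  "L_poly \<beta> x = (\<Sum>\<alpha> \<in> {\<alpha>. coarsening \<alpha> \<beta>}. xmon x (mset \<alpha>))"

end

theory Submission
  imports Defs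
begin

fun gl :: "('a \<Rightarrow> 'a \<Rightarrow> 'a) \<Rightarrow> 'a list \<Rightarrow> bool list \<Rightarrow> 'a list" where
  "gl g (a # b # r) (True # js) = gl g (g a b # r) js"
| "gl g (a # b # r) (False # js) = a # gl g (b # r) js"
| "gl g xs js = xs"

lemma gl_map:
  "(\<And>a b. h (g1 a b) = g2 (h a) (h b)) \<Longrightarrow> map h (gl g1 xs js) = gl g2 (map h xs) js"
  by (induction g1 xs js rule: gl.induct) auto

lemma gl_concat: "concat (gl (@) xs js) = concat xs"
  by (induction "(@) :: 'a list \<Rightarrow> _" xs js rule: gl.induct) auto

lemma gl_nonempty: "\<forall>b\<in>set xs. b \<noteq> [] \<Longrightarrow> \<forall>b\<in>set (gl (@) xs js). b \<noteq> []"
  by (induction "(@) :: 'a list \<Rightarrow> _" xs js rule: gl.induct) auto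

lemma gl_hd: "gl ((+)::nat\<Rightarrow>_) (a # r) js \<noteq> [] \<and> a \<le> hd (gl (+) (a # r) js)"
  by (induction "(+)::nat\<Rightarrow>_" "a # r" js arbitrary: a r rule: gl.induct) fastforce+

lemma gl_inj:
  assumes "\<forall>b\<in>set xs. (0::nat) < b" "length js1 = length xs - 1" "length js2 = length xs - 1"
    "gl (+) xs js1 = gl (+) xs js2"
  shows "js1 = js2"
  using assms
proof (induction "(+)::nat\<Rightarrow>_" xs js1 arbitrary: js2 rule: gl.induct)
  case (1 a b r js)
  from "1.prems"(3) obtain j js2' where j: "js2 = j # js2'" by (cases js2) auto
  have pos: "0 < b" "\<forall>c\<in>set ((a+b) # r). 0 < c" using "1.prems"(1) by auto
  have eq: "gl (+) ((a+b) # r) js = gl (+) (a # b # r) js2" using "1.prems"(4) by simp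
  show ?case
  proof (cases j)
    case True
    have "js = js2'"
    proof (rule "1.hyps")
      show "\<forall>c\<in>set ((a+b) # r). 0 < c" by (fact pos(2))
      show "length js = length ((a + b) # r) - 1" using "1.prems"(2) by simp
      show "length js2' = length ((a + b) # r) - 1" using "1.prems"(3) j by simp
      show "gl (+) ((a + b) # r) js = gl (+) ((a + b) # r) js2'" using eq j True by simp
    qed
    then show ?thesis using j True by simp
  next
    case False
    have "a + b \<le> hd (gl (+) ((a+b) # r) js)" using gl_hd by blast
    moreover have "gl (+) ((a+b) # r) js = a # gl (+) (b # r) js2'" using eq j False by simp
    ultimately have "a + b \<le> a" by simp
    then show ?thesis using pos(1) by simp
  qed
next
  case (2 a b r js)
  from "2.prems"(3) obtain j js2' where j: "js2 = j # js2'" by (cases js2) auto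
  have pos: "0 < b" "\<forall>c\<in>set (b # r). 0 < c" using "2.prems"(1) by auto
  have eq: "a # gl (+) (b # r) js = gl (+) (a # b # r) js2" using "2.prems"(4) by simp
  show ?case
  proof (cases j)
    case False
    have "js = js2'"
    proof (rule "2.hyps")
      show "\<forall>c\<in>set (b # r). 0 < c" by (fact pos(2))
      show "length js = length (b # r) - 1" using "2.prems"(2) by simp
      show "length js2' = length (b # r) - 1" using "2.prems"(3) j by simp
      show "gl (+) (b # r) js = gl (+) (b # r) js2'" using eq j False by simp
    qed
    then show ?thesis using j False by simp
  next
    case True
    have "a + b \<le> hd (gl (+) ((a+b) # r) js2')" using gl_hd by blast
    moreover have "gl (+) ((a+b) # r) js2' = a # gl (+) (b # r) js" using eq j True by simp
    ultimately have "a + b \<le> a" by simp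
    then show ?thesis using pos(1) by simp
  qed
qed simp_all

fun cutsOf :: "'a list list \<Rightarrow> bool list" where
  "cutsOf [] = []"
| "cutsOf [b] = replicate (length b - 1) True"
| "cutsOf (b # c # bs) = replicate (length b - 1) True @ False # cutsOf (c # bs)"

lemma gl_repl:
  "gl (@) (p # map (\<lambda>y. [y]) c @ r) (replicate (length c) True @ js) = gl (@) ((p @ c) # r) js"
  by (induction c arbitrary: p) auto

lemma gl_cuts:
  assumes "\<forall>b\<in>set bs. b \<noteq> []"
  shows "gl (@) (map (\<lambda>y. [y]) (concat bs)) (cutsOf bs) = bs"
  using assms
proof (induction bs rule: cutsOf.induct)
  case (2 b)
  then obtain y b' where b: "b = y # b'" by (cases b) auto
  have "gl (@) ([y] # map (\<lambda>y. [y]) b' @ []) (replicate (length b') True @ []) = gl (@) (([y] @ b') # []) []"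
    by (rule gl_repl)
  then show ?case using b by simp
next
  case (3 b c bs)
  then obtain y b' where b: "b = y # b'" by (cases b) auto
  obtain z c' where c: "c = z # c'" using 3 by (cases c) auto
  have "gl (@) ([y] # map (\<lambda>y. [y]) b' @ map (\<lambda>y. [y]) (concat (c # bs))) (replicate (length b') True @ False # cutsOf (c # bs))
     = gl (@) (([y] @ b') # map (\<lambda>y. [y]) (concat (c # bs))) (False # cutsOf (c # bs))"
    by (rule gl_repl)
  also have "\<dots> = b # gl (@) (map (\<lambda>y. [y]) (concat (c # bs))) (cutsOf (c # bs))"
    using b c by simp
  also have "\<dots> = b # c # bs" using 3 by simp
  finally show ?case using b by simp
qed auto

lemma length_cutsOf: "\<forall>b\<in>set bs. b \<noteq> [] \<Longrightarrow> length (cutsOf bs) = length (concat bs) - 1"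
proof (induction bs rule: cutsOf.induct)
  case (3 b c bs)
  have l: "0 < length b" "0 < length c" using "3.prems" by auto
  have "length (cutsOf (c # bs)) = length (concat (c # bs)) - 1" using 3 by simp
  then have "length (cutsOf (b # c # bs)) = (length b - 1) + 1 + (length (concat (c#bs)) - 1)" by simp
  moreover have "length (concat (b # c # bs)) = length b + length (concat (c#bs))" by simp
  moreover have "0 < length (concat (c#bs))" using l by simp
  ultimately show ?case using l(1) by linarith
qed auto

lemma map_sgl_sum: "map sum_list (map (\<lambda>y. [y]) xs) = (xs::nat list)"
  by (induction xs) auto

lemma concat_sgl: "concat (map (\<lambda>y. [y]) xs) = xs"
  by (induction xs) auto

lemma gl_sum: "map sum_list (gl (@) (map (\<lambda>y. [y]) xs) js) = gl (+) (xs::nat list) js"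
proof -
  have "map sum_list (gl (@) (map (\<lambda>y. [y]) xs) js) = gl (+) (map sum_list (map (\<lambda>y. [y]) xs)) js"
    by (rule gl_map) simp
  then show ?thesis by (simp only: map_sgl_sum)
qed

lemma coarsenings_eq:
  assumes "xs \<noteq> []"
  shows "{\<alpha>. coarsening \<alpha> xs} = gl (+) xs ` {js. length js = length xs - 1}"
proof (intro equalityI subsetI)
  fix \<alpha> assume "\<alpha> \<in> {\<alpha>. coarsening \<alpha> xs}"
  then obtain bs where bs: "concat bs = xs" "\<forall>b\<in>set bs. b \<noteq> []" "\<alpha> = map sum_list bs"
    unfolding coarsening_def by auto
  define c where "c = cutsOf bs"
  have "bs = gl (@) (map (\<lambda>y. [y]) xs) c" using gl_cuts[OF bs(2)] bs(1) by (simp add: c_def)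
  then have "\<alpha> = gl (+) xs c" using bs(3) gl_sum by simp
  moreover have "length c = length xs - 1" using length_cutsOf[OF bs(2)] bs(1) by (simp add: c_def)
  ultimately show "\<alpha> \<in> gl (+) xs ` {js. length js = length xs - 1}" by blast
next
  fix \<alpha> assume "\<alpha> \<in> gl (+) xs ` {js. length js = length xs - 1}"
  then obtain js where a: "\<alpha> = gl (+) xs js" by auto
  let ?bs = "gl (@) (map (\<lambda>y. [y]) xs) js"
  have "\<alpha> = map sum_list ?bs" using a gl_sum by simp
  moreover have "concat ?bs = xs" by (simp only: gl_concat concat_sgl)
  moreover have "\<forall>b\<in>set ?bs. b \<noteq> []" by (rule gl_nonempty) auto
  ultimately show "\<alpha> \<in> {\<alpha>. coarsening \<alpha> xs}" unfolding coarsening_def by blast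
qed

lemma L_poly_gl:
  assumes "xs \<noteq> []" "\<forall>b\<in>set xs. (0::nat) < b"
  shows "L_poly xs x = (\<Sum>js\<in>{js. length js = length xs - 1}. xmon x (mset (gl (+) xs js)))"
proof -
  have "inj_on (gl (+) xs) {js. length js = length xs - 1}"
    using gl_inj[OF assms(2)] by (auto simp: inj_on_def)
  then show ?thesis unfolding L_poly_def coarsenings_eq[OF assms(1)]
    by (simp add: sum.reindex)
qed


lemma adj_sym: "sym (adj_rel A)"
  by (auto simp: adj_rel_def sym_def insert_commute)

lemma rt_sym: "(a,b) \<in> (adj_rel A)\<^sup>* \<Longrightarrow> (b,a) \<in> (adj_rel A)\<^sup>*"
  using symD[OF sym_rtrancl[OF adj_sym[of A]]] by blast

lemma adj_mono: "A \<subseteq> B \<Longrightarrow> (adj_rel A)\<^sup>* \<subseteq> (adj_rel B)\<^sup>*"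
  by (rule rtrancl_mono) (auto simp: adj_rel_def)

lemma closed_rt:
  assumes "(a,b) \<in> (adj_rel A)\<^sup>*" "a \<in> X" "\<And>p q. p \<in> X \<Longrightarrow> {p,q} \<in> A \<Longrightarrow> q \<in> X"
  shows "b \<in> X"
  using assms(1,2) by (induction rule: rtrancl_induct) (auto simp: adj_rel_def intro: assms(3))

lemma sorted_disj:
  "sorted_wrt (\<lambda>P Q. P \<inter> Q = {}) Ps \<Longrightarrow> P \<in> set Ps \<Longrightarrow> Q \<in> set Ps \<Longrightarrow> P \<noteq> Q \<Longrightarrow> P \<inter> Q = {}"
  by (induction Ps) auto

lemma sorted_disj_distinct:
  "sorted_wrt (\<lambda>P Q. P \<inter> Q = {}) Ps \<Longrightarrow> \<forall>P\<in>set Ps. P \<noteq> {} \<Longrightarrow> distinct Ps"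
  by (induction Ps) auto

lemma components_list:
  assumes disj: "sorted_wrt (\<lambda>P Q. P \<inter> Q = {}) Ps"
    and cov: "\<Union>(set Ps) = V" and ne: "\<forall>P\<in>set Ps. P \<noteq> {}"
    and conn: "\<forall>P\<in>set Ps. \<forall>a\<in>P. \<forall>b\<in>P. (a,b) \<in> (adj_rel A)\<^sup>*"
    and edges: "\<forall>e\<in>A. \<exists>P\<in>set Ps. e \<subseteq> P"
  shows "components V A = set Ps"
proof -
  have comp: "component V A u = P" if P: "P \<in> set Ps" "u \<in> P" for P u
  proof
    show "component V A u \<subseteq> P"
    proof
      fix w assume "w \<in> component V A u"
      then have "(u,w) \<in> (adj_rel A)\<^sup>*" by (simp add: component_def)
      then show "w \<in> P"
      proof (rule closed_rt)
        show "u \<in> P" by fact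
        fix p q assume "p \<in> P" "{p,q} \<in> A"
        then obtain P' where "P' \<in> set Ps" "{p,q} \<subseteq> P'" using edges by blast
        then show "q \<in> P" using sorted_disj[OF disj P(1)] \<open>p \<in> P\<close> by blast
      qed
    qed
    show "P \<subseteq> component V A u"
      using P cov conn by (auto simp: component_def)
  qed
  show ?thesis
  proof
    show "components V A \<subseteq> set Ps"
      using cov comp by (auto simp: components_def)
    show "set Ps \<subseteq> components V A"
    proof
      fix P assume "P \<in> set Ps"
      then obtain u where "u \<in> P" using ne by blast
      then show "P \<in> components V A" using comp[OF \<open>P \<in> set Ps\<close>] cov \<open>P \<in> set Ps\<close>
        unfolding components_def by blast
    qed
  qed
qed

lemma gl_union: "\<Union>(set (gl (\<union>) Ps js)) = \<Union>(set Ps)"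
proof (induction "(\<union>) :: 'a set \<Rightarrow> _" Ps js rule: gl.induct)
  case (1 a b r js)
  then show ?case by (simp add: Un_assoc)
next
  case (2 a b r js)
  then show ?case by simp
qed simp_all

lemma gl_ne: "\<forall>P\<in>set Ps. P \<noteq> {} \<Longrightarrow> \<forall>P\<in>set (gl (\<union>) Ps js). P \<noteq> {}"
proof (induction "(\<union>) :: 'a set \<Rightarrow> _" Ps js rule: gl.induct)
  case (1 a b r js)
  then show ?case by simp
next
  case (2 a b r js)
  then show ?case by simp
qed simp_all

lemma gl_disj: "sorted_wrt (\<lambda>P Q. P \<inter> Q = {}) Ps \<Longrightarrow> sorted_wrt (\<lambda>P Q. P \<inter> Q = {}) (gl (\<union>) Ps js)"
proof (induction "(\<union>) :: 'a set \<Rightarrow> _" Ps js rule: gl.induct)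
  case (1 a b r js)
  have "sorted_wrt (\<lambda>P Q. P \<inter> Q = {}) ((a \<union> b) # r)"
    using "1.prems" by (auto simp: Int_Un_distrib2)
  then show ?case using "1.hyps" by simp
next
  case (2 a b r js)
  have U: "\<Union>(set (gl (\<union>) (b # r) js)) = \<Union>(set (b # r))" by (rule gl_union)
  have "\<forall>y\<in>set (gl (\<union>) (b # r) js). a \<inter> y = {}"
  proof
    fix y assume "y \<in> set (gl (\<union>) (b # r) js)"
    then have "y \<subseteq> \<Union>(set (b # r))" using U by blast
    moreover have "a \<inter> \<Union>(set (b # r)) = {}" using "2.prems" by auto
    ultimately show "a \<inter> y = {}" by blast
  qed
  moreover have "sorted_wrt (\<lambda>P Q. P \<inter> Q = {}) (gl (\<union>) (b # r) js)"
    using "2.prems" "2.hyps" by simp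
  ultimately show ?case by simp
qed simp_all

lemma gl_card:
  "sorted_wrt (\<lambda>P Q. P \<inter> Q = {}) Ps \<Longrightarrow> \<forall>P\<in>set Ps. finite P \<Longrightarrow>
    map card (gl (\<union>) Ps js) = gl (+) (map card Ps) js"
proof (induction "(\<union>) :: 'a set \<Rightarrow> _" Ps js rule: gl.induct)
  case (1 a b r js)
  have "card (a \<union> b) = card a + card b" using "1.prems" by (simp add: card_Un_disjoint)
  moreover have "map card (gl (\<union>) ((a \<union> b) # r) js) = gl (+) (map card ((a \<union> b) # r)) js"
  proof (rule "1.hyps")
    show "sorted_wrt (\<lambda>P Q. P \<inter> Q = {}) ((a \<union> b) # r)"
      using "1.prems" by (auto simp: Int_Un_distrib2)
    show "\<forall>P\<in>set ((a \<union> b) # r). finite P" using "1.prems" by simp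
  qed
  ultimately show ?case by simp
next
  case (2 a b r js)
  have "map card (gl (\<union>) (b # r) js) = gl (+) (map card (b # r)) js"
    using "2.prems" "2.hyps" by simp
  then show ?case by simp
qed simp_all

fun jok :: "('v \<times> 'v) set \<Rightarrow> 'v list \<Rightarrow> bool list \<Rightarrow> bool" where
  "jok R (a # b # r) (j # js) = ((j \<longrightarrow> (a,b) \<in> R) \<and> jok R (b # r) js)"
| "jok R _ _ = True"

lemma jok_nth:
  "(\<And>i. Suc i < length reps \<Longrightarrow> i < length js \<Longrightarrow> js ! i \<Longrightarrow> (reps ! i, reps ! Suc i) \<in> R) \<Longrightarrow> jok R reps js"
proof (induction R reps js rule: jok.induct)
  case (1 R a b r j js)
  have "jok R (b # r) js"
  proof (rule "1.IH")
    fix i assume "Suc i < length (b # r)" "i < length js" "js ! i"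
    then show "((b # r) ! i, (b # r) ! Suc i) \<in> R" using "1.prems"[of "Suc i"] by simp
  qed
  moreover have "j \<longrightarrow> (a,b) \<in> R" using "1.prems"[of 0] by auto
  ultimately show ?case by simp
qed simp_all

lemma gl_conn:
  assumes "sym R" "trans R"
  shows "list_all2 (\<in>) reps Ps \<Longrightarrow> \<forall>P\<in>set Ps. \<forall>a\<in>P. \<forall>b\<in>P. (a,b)\<in>R \<Longrightarrow> jok R reps js
    \<Longrightarrow> \<forall>P\<in>set (gl (\<union>) Ps js). \<forall>a\<in>P. \<forall>b\<in>P. (a,b)\<in>R"
proof (induction "(\<union>) :: 'a set \<Rightarrow> _" Ps js arbitrary: reps rule: gl.induct)
  case (1 S T r js)
  then obtain p q reps' where reps: "reps = p # q # reps'" "p \<in> S" "q \<in> T" "list_all2 (\<in>) reps' r"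
    by (auto simp: list_all2_Cons2)
  have pq: "(p,q) \<in> R" using "1.prems"(3) reps by simp
  have ST: "\<forall>a\<in>S \<union> T. \<forall>b\<in>S \<union> T. (a,b)\<in>R"
  proof (intro ballI)
    fix a b assume ab: "a \<in> S \<union> T" "b \<in> S \<union> T"
    have S: "\<forall>a\<in>S. \<forall>b\<in>S. (a,b)\<in>R" and T: "\<forall>a\<in>T. \<forall>b\<in>T. (a,b)\<in>R" using "1.prems"(2) by auto
    have aq: "(a,q) \<in> R" if "a \<in> S \<union> T" for a
      using that S T pq reps assms(2) by (auto dest: transD)
    show "(a,b) \<in> R" using aq[OF ab(1)] aq[OF ab(2)] assms by (auto dest: symD transD)
  qed
  have "\<forall>P\<in>set (gl (\<union>) ((S \<union> T) # r) js). \<forall>a\<in>P. \<forall>b\<in>P. (a,b)\<in>R"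
    by (rule "1.hyps"[of "q # reps'"]) (use reps "1.prems" ST in auto)
  then show ?case by simp
next
  case (2 S T r js)
  then obtain p q reps' where reps: "reps = p # q # reps'" "p \<in> S" "q \<in> T" "list_all2 (\<in>) reps' r"
    by (auto simp: list_all2_Cons2)
  have "\<forall>P\<in>set (gl (\<union>) (T # r) js). \<forall>a\<in>P. \<forall>b\<in>P. (a,b)\<in>R"
    by (rule "2.hyps"[of "q # reps'"]) (use reps "2.prems" in auto)
  then show ?case using "2.prems" by simp
qed simp_all

fun cov2 :: "'v set list \<Rightarrow> bool list \<Rightarrow> 'v set \<Rightarrow> bool" where
  "cov2 (P # Q # r) (j # js) X = ((j \<and> X \<subseteq> P \<union> Q) \<or> cov2 (Q # r) js X)"
| "cov2 _ _ X = False"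

lemma cov2_mono: "cov2 (T # r) js X \<Longrightarrow> cov2 ((S \<union> T) # r) js X"
  by (cases r; cases js) auto

lemma gl_cov: "(\<exists>P\<in>set Ps. X \<subseteq> P) \<or> cov2 Ps js X \<Longrightarrow> \<exists>P\<in>set (gl (\<union>) Ps js). X \<subseteq> P"
proof (induction "(\<union>) :: 'a set \<Rightarrow> _" Ps js rule: gl.induct)
  case (1 S T r js)
  have "\<exists>P\<in>set (gl (\<union>) ((S \<union> T) # r) js). X \<subseteq> P"
  proof (rule "1.hyps")
    from "1.prems" show "(\<exists>P\<in>set ((S \<union> T) # r). X \<subseteq> P) \<or> cov2 ((S \<union> T) # r) js X"
      by (auto dest: cov2_mono)
  qed
  then show ?case by simp
next
  case (2 S T r js)
  have "(\<exists>P\<in>set (T # r). X \<subseteq> P) \<or> cov2 (T # r) js X \<Longrightarrow> \<exists>P\<in>set (gl (\<union>) (T # r) js). X \<subseteq> P"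
    by (rule "2.hyps")
  then show ?case using "2.prems" by auto
qed simp_all

lemma cov2_nth:
  "Suc i < length Ps \<Longrightarrow> i < length js \<Longrightarrow> js ! i \<Longrightarrow> X \<subseteq> Ps ! i \<union> Ps ! Suc i \<Longrightarrow> cov2 Ps js X"
proof (induction Ps js X arbitrary: i rule: cov2.induct)
  case (1 P Q r j js X)
  show ?case
  proof (cases i)
    case 0
    then show ?thesis using "1.prems" by simp
  next
    case (Suc k)
    have "cov2 (Q # r) js X"
      by (rule "1.IH"[of k]) (use "1.prems" Suc in simp_all)
    then show ?thesis by simp
  qed
next
  case ("2_1" a b) then show ?case by simp
next
  case ("2_2" a b c) then show ?case by simp
next
  case ("2_3" a b) then show ?case by simp
qed

definition Aof :: "'v set \<Rightarrow> 'v set set \<Rightarrow> 'v list \<Rightarrow> bool list \<Rightarrow> 'v set set" where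
  "Aof V E vs js = leaf_edges V E \<union> {{vs ! i, vs ! Suc i} | i. Suc i < length vs \<and> js ! i}"

context
  fixes V :: "'v set" and E :: "'v set set" and vs :: "'v list"
  assumes tree: "is_tree V E" and sp: "is_spine V E vs"
begin

lemma edge_form: "e \<in> E \<Longrightarrow> \<exists>u w. u \<noteq> w \<and> u \<in> V \<and> w \<in> V \<and> e = {u,w}"
  using tree unfolding is_tree_def simple_graph_def by blast

lemma edge_in_V: "{a,b} \<in> E \<Longrightarrow> a \<in> V \<and> b \<in> V \<and> a \<noteq> b"
proof -
  assume "{a,b} \<in> E"
  then obtain u w where uw: "u \<noteq> w" "u \<in> V" "w \<in> V" "{a,b} = {u,w}" using edge_form by blast
  have ab: "a \<in> {u,w}" "b \<in> {u,w}" using uw(4) by blast+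
  have "a \<noteq> b"
  proof
    assume "a = b"
    then have "u \<in> {a}" "w \<in> {a}" using uw(4) by blast+
    then show False using uw(1) by blast
  qed
  then show ?thesis using ab uw(2,3) by blast
qed

lemma int_eq: "internal V E = set vs"
  using sp by (simp add: is_spine_def)

lemma vs_V: "v \<in> set vs \<Longrightarrow> v \<in> V \<and> \<not> is_leaf E v"
  using int_eq by (auto simp: internal_def)

lemma nonint_leaf: "u \<in> V \<Longrightarrow> u \<notin> set vs \<Longrightarrow> is_leaf E u"
  using int_eq by (auto simp: internal_def)

lemma len_vs: "2 \<le> length vs" and dist_vs: "distinct vs"
  using sp by (auto simp: is_spine_def)

lemma leaf_unique:
  assumes "is_leaf E u" "e1 \<in> E" "u \<in> e1" "e2 \<in> E" "u \<in> e2"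
  shows "e1 = e2"
proof -
  have "card {e \<in> E. u \<in> e} = 1" using assms(1) by (simp add: is_leaf_def degree_def)
  then obtain e0 where e0: "{e \<in> E. u \<in> e} = {e0}" by (rule card_1_singletonE)
  have "e1 \<in> {e0}" "e2 \<in> {e0}" using assms(2-5) e0 by blast+
  then show ?thesis by blast
qed

lemma cover:
  assumes u: "u \<in> V"
  shows "\<exists>v\<in>set vs. u \<in> component V (leaf_edges V E) v"
proof (cases "u \<in> set vs")
  case True
  then show ?thesis using u by (auto simp: component_def)
next
  case False
  have leaf: "is_leaf E u" using nonint_leaf[OF u False] .
  then have "card {e \<in> E. u \<in> e} = 1" by (simp add: is_leaf_def degree_def)
  then obtain e0 where e0s: "{e \<in> E. u \<in> e} = {e0}" by (rule card_1_singletonE)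
  then have e0: "e0 \<in> E" "u \<in> e0" by auto
  obtain p q where pq: "p \<noteq> q" "p \<in> V" "q \<in> V" "e0 = {p,q}" using edge_form[OF e0(1)] by blast
  obtain w where w: "e0 = {u,w}" "w \<noteq> u" "w \<in> V"
  proof (cases "u = p")
    case True then show ?thesis using that pq by auto
  next
    case False then have "u = q" using e0(2) pq by auto
    then show ?thesis using that pq by (auto simp: insert_commute)
  qed
  show ?thesis
  proof (cases "w \<in> set vs")
    case True
    have "e0 \<in> leaf_edges V E" using e0 False int_eq by (auto simp: leaf_edges_def)
    then have "(w,u) \<in> adj_rel (leaf_edges V E)" using w by (auto simp: adj_rel_def insert_commute)
    then have "u \<in> component V (leaf_edges V E) w" using u by (auto simp: component_def)
    then show ?thesis using True by blast
  next
    case wF: False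
    have wleaf: "is_leaf E w" using nonint_leaf[OF w(3) wF] .
    have "0 < length vs" using len_vs by linarith
    then have v0: "vs ! 0 \<in> set vs" by (rule nth_mem)
    then have v0V: "vs ! 0 \<in> V" using vs_V by blast
    have "(u, vs ! 0) \<in> (adj_rel E)\<^sup>*"
      using tree u v0V by (auto simp: is_tree_def connected_graph_def)
    then have "vs ! 0 \<in> {u, w}"
    proof (rule closed_rt)
      show "u \<in> {u,w}" by simp
      fix a b assume a: "a \<in> {u,w}" and ab: "{a,b} \<in> E"
      have "is_leaf E a" using a leaf wleaf by auto
      moreover have "a \<in> e0" using a w by auto
      ultimately have "{a,b} = e0" using leaf_unique[of a "{a,b}" e0] ab e0 by auto
      then show "b \<in> {u,w}" using w by auto
    qed
    then show ?thesis using v0 False wF by auto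
  qed
qed

lemma star_sub:
  assumes v: "v \<in> set vs"
  shows "component V (leaf_edges V E) v \<subseteq> insert v {u. is_leaf E u \<and> {u,v} \<in> E}"
proof
  fix w assume "w \<in> component V (leaf_edges V E) v"
  then have "(v,w) \<in> (adj_rel (leaf_edges V E))\<^sup>*" by (simp add: component_def)
  then show "w \<in> insert v {u. is_leaf E u \<and> {u,v} \<in> E}"
  proof (rule closed_rt)
    show "v \<in> insert v {u. is_leaf E u \<and> {u,v} \<in> E}" by simp
    fix p q assume p: "p \<in> insert v {u. is_leaf E u \<and> {u,v} \<in> E}" and pq: "{p,q} \<in> leaf_edges V E"
    have pqE: "{p,q} \<in> E" and nsub: "\<not> {p,q} \<subseteq> set vs" using pq int_eq by (auto simp: leaf_edges_def)
    have pqV: "p \<in> V \<and> q \<in> V \<and> p \<noteq> q" using edge_in_V[OF pqE] .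
    show "q \<in> insert v {u. is_leaf E u \<and> {u,v} \<in> E}"
    proof (cases "p = v")
      case True
      then have "q \<notin> set vs" using nsub v by auto
      then have "is_leaf E q" using nonint_leaf pqV by blast
      moreover have "{q,v} \<in> E" using pqE True by (simp add: insert_commute)
      ultimately show ?thesis by simp
    next
      case False
      then have pl: "is_leaf E p" "{p,v} \<in> E" using p by auto
      have "{p,q} = {p,v}" using leaf_unique[OF pl(1) pqE _ pl(2)] by simp
      then have "q = v" using pqV by (auto simp: doubleton_eq_iff)
      then show ?thesis by simp
    qed
  qed
qed

lemma star_basic:
  assumes "v \<in> set vs"
  shows "v \<in> component V (leaf_edges V E) v" "component V (leaf_edges V E) v \<subseteq> V"
    "finite (component V (leaf_edges V E) v)"
proof -
  have fin: "finite V" using tree by (simp add: is_tree_def simple_graph_def)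
  show "v \<in> component V (leaf_edges V E) v" using vs_V[OF assms] by (simp add: component_def)
  show "component V (leaf_edges V E) v \<subseteq> V" by (auto simp: component_def)
  then show "finite (component V (leaf_edges V E) v)" using fin finite_subset by blast
qed

lemma stars_disjoint:
  assumes v: "v \<in> set vs" and w: "w \<in> set vs" and vw: "v \<noteq> w"
  shows "component V (leaf_edges V E) v \<inter> component V (leaf_edges V E) w = {}"
proof (rule ccontr)
  assume "component V (leaf_edges V E) v \<inter> component V (leaf_edges V E) w \<noteq> {}"
  then obtain u where "(v,u) \<in> (adj_rel (leaf_edges V E))\<^sup>*" "(w,u) \<in> (adj_rel (leaf_edges V E))\<^sup>*"
    by (auto simp: component_def)
  then have "(v,w) \<in> (adj_rel (leaf_edges V E))\<^sup>*" using rt_sym rtrancl_trans by metis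
  then have "w \<in> component V (leaf_edges V E) v" using vs_V[OF w] by (simp add: component_def)
  then have "w \<in> insert v {u. is_leaf E u \<and> {u,v} \<in> E}" using star_sub[OF v] by blast
  then show False using vw vs_V[OF w] by auto
qed

lemma leaf_edge_in_star:
  assumes e: "e \<in> leaf_edges V E"
  shows "\<exists>v\<in>set vs. e \<subseteq> component V (leaf_edges V E) v"
proof -
  have eE: "e \<in> E" using e by (simp add: leaf_edges_def)
  obtain a b where ab: "a \<noteq> b" "a \<in> V" "b \<in> V" "e = {a,b}" using edge_form[OF eE] by blast
  obtain v where v: "v \<in> set vs" "a \<in> component V (leaf_edges V E) v" using cover[OF ab(2)] by blast
  have "(v,a) \<in> (adj_rel (leaf_edges V E))\<^sup>*" using v by (simp add: component_def)
  moreover have "(a,b) \<in> adj_rel (leaf_edges V E)" using e ab by (simp add: adj_rel_def)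
  ultimately have "(v,b) \<in> (adj_rel (leaf_edges V E))\<^sup>*" by (rule rtrancl_into_rtrancl)
  then have "b \<in> component V (leaf_edges V E) v" using ab by (simp add: component_def)
  then show ?thesis using v ab by auto
qed

lemma spine_eq: "{e \<in> E. e \<subseteq> set vs} = {{vs ! i, vs ! Suc i} | i. Suc i < length vs}"
  using sp unfolding is_spine_def by (elim conjE) assumption

lemma spE_inE: "Suc i < length vs \<Longrightarrow> {vs ! i, vs ! Suc i} \<in> E"
proof -
  assume i: "Suc i < length vs"
  have "{vs ! i, vs ! Suc i} \<in> {{vs ! i, vs ! Suc i} | i. Suc i < length vs}" using i by blast
  then have "{vs ! i, vs ! Suc i} \<in> {e \<in> E. e \<subseteq> set vs}" unfolding spine_eq .
  then show ?thesis by simp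
qed

lemma spE_notL: "Suc i < length vs \<Longrightarrow> {vs ! i, vs ! Suc i} \<notin> leaf_edges V E"
proof -
  assume i: "Suc i < length vs"
  have "vs ! i \<in> set vs" "vs ! Suc i \<in> set vs" using i by (simp_all add: nth_mem)
  then have "{vs ! i, vs ! Suc i} \<subseteq> internal V E" using int_eq by simp
  then show ?thesis by (simp add: leaf_edges_def)
qed

lemma spE_inj:
  assumes "Suc i < length vs" "Suc j < length vs" "{vs ! i, vs ! Suc i} = {vs ! j, vs ! Suc j}"
  shows "i = j"
proof -
  have d: "\<And>k l. k < length vs \<Longrightarrow> l < length vs \<Longrightarrow> vs ! k = vs ! l \<Longrightarrow> k = l"
    using dist_vs nth_eq_iff_index_eq by blast
  from assms(3) have "(vs ! i = vs ! j \<and> vs ! Suc i = vs ! Suc j) \<or> (vs ! i = vs ! Suc j \<and> vs ! Suc i = vs ! j)"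
    by (simp add: doubleton_eq_iff)
  then show ?thesis
  proof
    assume "vs ! i = vs ! j \<and> vs ! Suc i = vs ! Suc j"
    then show ?thesis using d assms(1,2) by simp
  next
    assume h: "vs ! i = vs ! Suc j \<and> vs ! Suc i = vs ! j"
    then have "i = Suc j" "Suc i = j" using d assms(1,2) by auto
    then show ?thesis by simp
  qed
qed

lemma E_split: "e \<in> E \<Longrightarrow> e \<in> leaf_edges V E \<or> (\<exists>i. Suc i < length vs \<and> e = {vs ! i, vs ! Suc i})"
proof -
  assume e: "e \<in> E"
  show ?thesis
  proof (cases "e \<subseteq> set vs")
    case True
    then have "e \<in> {e \<in> E. e \<subseteq> set vs}" using e by simp
    then have "e \<in> {{vs ! i, vs ! Suc i} | i. Suc i < length vs}" unfolding spine_eq .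
    then show ?thesis by blast
  next
    case False
    then show ?thesis using e int_eq by (simp add: leaf_edges_def)
  qed
qed

lemma Aof_range: "{A. A \<subseteq> E \<and> leaf_edges V E \<subseteq> A} = Aof V E vs ` {js. length js = length vs - 1}"
proof (intro equalityI subsetI)
  fix A assume A: "A \<in> {A. A \<subseteq> E \<and> leaf_edges V E \<subseteq> A}"
  define js where "js = map (\<lambda>i. {vs ! i, vs ! Suc i} \<in> A) [0..<length vs - 1]"
  have "A = Aof V E vs js"
  proof
    show "A \<subseteq> Aof V E vs js"
    proof
      fix e assume "e \<in> A"
      then have "e \<in> E" using A by blast
      then consider "e \<in> leaf_edges V E" | i where "Suc i < length vs" "e = {vs ! i, vs ! Suc i}"
        using E_split by blast
      then show "e \<in> Aof V E vs js"
      proof cases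
        case 1 then show ?thesis by (simp add: Aof_def)
      next
        case (2 i)
        then have "i < length vs - 1" by simp
        then have "js ! i" using 2 \<open>e \<in> A\<close> by (simp add: js_def)
        then show ?thesis using 2 unfolding Aof_def by blast
      qed
    qed
    show "Aof V E vs js \<subseteq> A"
    proof
      fix e assume "e \<in> Aof V E vs js"
      then consider "e \<in> leaf_edges V E" | i where "Suc i < length vs" "js ! i" "e = {vs ! i, vs ! Suc i}"
        unfolding Aof_def by blast
      then show "e \<in> A"
      proof cases
        case 1 then show ?thesis using A by blast
      next
        case (2 i)
        then have "i < length vs - 1" by simp
        then show ?thesis using 2 by (simp add: js_def)
      qed
    qed
  qed
  moreover have "length js = length vs - 1" by (simp add: js_def)
  ultimately show "A \<in> Aof V E vs ` {js. length js = length vs - 1}" by blast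
next
  fix A assume "A \<in> Aof V E vs ` {js. length js = length vs - 1}"
  then obtain js where A: "A = Aof V E vs js" by blast
  have "leaf_edges V E \<subseteq> E" by (auto simp: leaf_edges_def)
  then show "A \<in> {A. A \<subseteq> E \<and> leaf_edges V E \<subseteq> A}"
    using spE_inE unfolding A Aof_def by blast
qed

lemma spE_in_Aof:
  assumes "Suc i < length vs"
  shows "{vs ! i, vs ! Suc i} \<in> Aof V E vs js \<longleftrightarrow> js ! i"
proof
  assume "{vs ! i, vs ! Suc i} \<in> Aof V E vs js"
  then obtain j where "Suc j < length vs" "js ! j" "{vs ! i, vs ! Suc i} = {vs ! j, vs ! Suc j}"
    using spE_notL[OF assms] unfolding Aof_def by blast
  then show "js ! i" using spE_inj[OF assms] by metis
next
  assume "js ! i"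
  then show "{vs ! i, vs ! Suc i} \<in> Aof V E vs js" using assms unfolding Aof_def by blast
qed

lemma Aof_inj: "inj_on (Aof V E vs) {js. length js = length vs - 1}"
proof (rule inj_onI)
  fix js1 js2 assume j1: "js1 \<in> {js. length js = length vs - 1}" and j2: "js2 \<in> {js. length js = length vs - 1}"
    and eq: "Aof V E vs js1 = Aof V E vs js2"
  show "js1 = js2"
  proof (rule nth_equalityI)
    show "length js1 = length js2" using j1 j2 by simp
    fix i assume "i < length js1"
    then have i: "Suc i < length vs" using j1 by simp
    show "js1 ! i = js2 ! i" using spE_in_Aof[OF i, of js1] spE_in_Aof[OF i, of js2] eq by simp
  qed
qed

lemma part_Aof:
  assumes js: "length js = length vs - 1"
  shows "partition_of V (Aof V E vs js) = mset (gl (+) (map (\<lambda>v. card (component V (leaf_edges V E) v)) vs) js)"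
proof -
  define S where "S = component V (leaf_edges V E)"
  define Ss where "Ss = map S vs"
  define A where "A = Aof V E vs js"
  define Ps where "Ps = gl (\<union>) Ss js"
  define R where "R = (adj_rel A)\<^sup>*"
  have LA: "leaf_edges V E \<subseteq> A" by (simp add: A_def Aof_def)
  have disjSs: "sorted_wrt (\<lambda>P Q. P \<inter> Q = {}) Ss"
    unfolding sorted_wrt_iff_nth_less
  proof (intro allI impI)
    fix i j assume ij0: "i < j" "j < length Ss"
    then have ij: "i < j \<and> j < length Ss" by simp
    then have "vs ! i \<noteq> vs ! j" "vs ! i \<in> set vs" "vs ! j \<in> set vs"
      using dist_vs by (auto simp: Ss_def nth_eq_iff_index_eq)
    then show "Ss ! i \<inter> Ss ! j = {}" using ij stars_disjoint by (simp add: Ss_def S_def)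
  qed
  have covSs: "\<Union>(set Ss) = V"
  proof
    show "\<Union>(set Ss) \<subseteq> V" using star_basic(2) by (auto simp: Ss_def S_def)
    show "V \<subseteq> \<Union>(set Ss)" using cover by (fastforce simp: Ss_def S_def)
  qed
  have neSs: "\<forall>P\<in>set Ss. P \<noteq> {}" using star_basic(1) by (auto simp: Ss_def S_def)
  have finSs: "\<forall>P\<in>set Ss. finite P" using star_basic(3) by (auto simp: Ss_def S_def)
  have symR: "sym R" unfolding R_def by (rule sym_rtrancl[OF adj_sym])
  have transR: "trans R" unfolding R_def by (rule trans_rtrancl)
  have connSs: "\<forall>P\<in>set Ss. \<forall>a\<in>P. \<forall>b\<in>P. (a,b) \<in> R"
  proof (intro ballI)
    fix P a b assume P: "P \<in> set Ss" and a: "a \<in> P" and b: "b \<in> P"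
    then obtain v where v: "P = S v" by (auto simp: Ss_def)
    have "(v,a) \<in> R" "(v,b) \<in> R" using a b v adj_mono[OF LA]
      by (auto simp: S_def component_def R_def)
    then show "(a,b) \<in> R" using symR transR by (meson symD transD)
  qed
  have reps: "list_all2 (\<in>) vs Ss"
    unfolding Ss_def list_all2_conv_all_nth using star_basic(1) by (simp add: S_def)
  have jk: "jok R vs js"
  proof (rule jok_nth)
    fix i assume "Suc i < length vs" "i < length js" "js ! i"
    then have "{vs ! i, vs ! Suc i} \<in> A" by (simp add: A_def spE_in_Aof)
    then show "(vs ! i, vs ! Suc i) \<in> R" by (auto simp: R_def adj_rel_def)
  qed
  have connPs: "\<forall>P\<in>set Ps. \<forall>a\<in>P. \<forall>b\<in>P. (a,b) \<in> R"
    unfolding Ps_def using gl_conn[OF symR transR reps connSs jk] .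
  have edges: "\<forall>e\<in>A. \<exists>P\<in>set Ps. e \<subseteq> P"
  proof
    fix e assume "e \<in> A"
    then consider "e \<in> leaf_edges V E" | i where "Suc i < length vs" "js ! i" "e = {vs ! i, vs ! Suc i}"
      unfolding A_def Aof_def by blast
    then show "\<exists>P\<in>set Ps. e \<subseteq> P"
    proof cases
      case 1
      then obtain v where "v \<in> set vs" "e \<subseteq> S v" using leaf_edge_in_star by (auto simp: S_def)
      then have "\<exists>P\<in>set Ss. e \<subseteq> P" by (auto simp: Ss_def)
      then show ?thesis unfolding Ps_def using gl_cov by blast
    next
      case (2 i)
      have "e \<subseteq> Ss ! i \<union> Ss ! Suc i"
        using 2 star_basic(1) by (auto simp: Ss_def S_def)
      then have "cov2 Ss js e" using 2 js by (intro cov2_nth[of i]) (auto simp: Ss_def)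
      then show ?thesis unfolding Ps_def using gl_cov by blast
    qed
  qed
  have comps: "components V A = set Ps"
  proof (rule components_list)
    show "sorted_wrt (\<lambda>P Q. P \<inter> Q = {}) Ps" unfolding Ps_def by (rule gl_disj[OF disjSs])
    show "\<Union>(set Ps) = V" unfolding Ps_def using gl_union[of Ss js] covSs by (rule trans)
    show "\<forall>P\<in>set Ps. P \<noteq> {}" unfolding Ps_def by (rule gl_ne[OF neSs])
    show "\<forall>P\<in>set Ps. \<forall>a\<in>P. \<forall>b\<in>P. (a,b) \<in> (adj_rel A)\<^sup>*" using connPs by (simp add: R_def)
    show "\<forall>e\<in>A. \<exists>P\<in>set Ps. e \<subseteq> P" by (fact edges)
  qed
  have dist: "distinct Ps"
    unfolding Ps_def by (rule sorted_disj_distinct[OF gl_disj[OF disjSs] gl_ne[OF neSs]])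
  have "partition_of V A = image_mset card (mset Ps)"
    unfolding partition_of_def comps using mset_set_set[OF dist] by simp
  also have "\<dots> = mset (map card Ps)" by simp
  also have "map card Ps = gl (+) (map card Ss) js"
    unfolding Ps_def by (rule gl_card[OF disjSs finSs])
  finally show ?thesis by (simp add: A_def Ss_def S_def comp_def)
qed

end

theorem proposition2p3:
  fixes V :: "'v set" and E :: "'v set set" and \<beta> :: "nat list"
    and x :: "nat \<Rightarrow> 'a::comm_ring_1"
  assumes "proper_caterpillar V E"
    and "\<beta> \<in> Phi V E"
  shows "U_L V E x = L_poly \<beta> x"
proof -
  have tree: "is_tree V E" using assms(1) by (simp add: proper_caterpillar_def caterpillar_def)
  obtain vs where sp: "is_spine V E vs"
    and \<beta>: "\<beta> = map (\<lambda>v. card (component V (leaf_edges V E) v)) vs"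
    using assms(2) by (auto simp: Phi_def)
  have len: "2 \<le> length vs" using sp by (simp add: is_spine_def)
  have ne: "\<beta> \<noteq> []" using len \<beta> by auto
  have pos: "\<forall>b\<in>set \<beta>. 0 < b"
  proof
    fix b assume "b \<in> set \<beta>"
    then obtain v where v: "v \<in> set vs" "b = card (component V (leaf_edges V E) v)" using \<beta> by auto
    then show "0 < b" using star_basic[OF tree sp v(1)] by (auto simp: card_gt_0_iff)
  qed
  have "U_L V E x = (\<Sum>A\<in>Aof V E vs ` {js. length js = length vs - 1}. xmon x (partition_of V A))"
    unfolding U_L_def Aof_range[OF tree sp] ..
  also have "\<dots> = (\<Sum>js\<in>{js. length js = length vs - 1}. xmon x (partition_of V (Aof V E vs js)))"
    by (rule sum.reindex[OF Aof_inj[OF tree sp], unfolded comp_def])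
  also have "\<dots> = (\<Sum>js\<in>{js. length js = length \<beta> - 1}. xmon x (mset (gl (+) \<beta> js)))"
    using part_Aof[OF tree sp] \<beta> by simp
  also have "\<dots> = L_poly \<beta> x" by (rule L_poly_gl[OF ne pos, symmetric])
  finally show ?thesis .
qed

end
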